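(* The family $\bigcup_{p\in\mathbb Z} D_p$, where $D_p=\{D_{p,\tau}\}_{\tau=0}^{\beta(|p|)-1}$, is an orthonormal basis of $L^2([0,1])$.
   Context: Define $\nu,\beta$ on $\mathbb N$ by $\nu(0)=0,\ \beta(0)=1$; $\nu(1)=1,\ \beta(1)=1$; and for $p\ge 2$, $\nu(p)=2^{p-1}+2^{p-2}$, $\beta(p)=2^{p-1}$. Set $\nu(-p)=-\nu(p)$ and $\beta(-p)=\beta(p)$. The DOST functions are: $D_{0,0}(t)=D_0(t)=1$; $D_{1,0}(t)=e^{2\pi i t}$; for $p\ge 2$ and $\tau=0,\dots,\beta(p)-1$, $$D_{p,\tau}(t)=\frac{1}{\sqrt{\beta(p)}}\sum_{f=\nu(p)-\beta(p)/2}^{\nu(p)+\beta(p)/2-1} e^{2\pi i f t}\,e^{-2\pi i f\tau/\beta(p)}=\frac{1}{\sqrt{\beta(p)}}\sum_{j=0}^{\beta(p)-1}e^{2\pi i(\beta(p)+j)(t-\tau/\beta(p))};$$ and for negative integers $p$, $D_{p,\tau}=\overline{D_{-p,\tau}}$, $\tau=0,\dots,\beta(|p|)-1$. Here $L^2([0,1])$ is the space of square-integrable 1-periodic functions with inner product $(f,g)=\int_0^1 f\bar g\,dt$. *)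

theory Defs
  imports "HOL-Analysis.Analysis"
begin

definition nu_nat :: "nat \<Rightarrow> int" where
  "nu_nat p = (if p = 0 then 0 else if p = 1 then 1 else 2^(p-1) + 2^(p-2))"

definition beta_nat :: "nat \<Rightarrow> nat" where
  "beta_nat p = (if p = 0 then 1 else if p = 1 then 1 else 2^(p-1))"

definition nu :: "int \<Rightarrow> int" where
  "nu p = (if p \<ge> 0 then nu_nat (nat p) else - nu_nat (nat (-p)))"

definition beta :: "int \<Rightarrow> nat" where
  "beta p = beta_nat (nat \<bar>p\<bar>)"

definition DOST_nat :: "nat \<Rightarrow> nat \<Rightarrow> real \<Rightarrow> complex" where
  "DOST_nat p \<tau> t =
    (if p = 0 then 1
     else if p = 1 then exp (2 * pi * \<i> * t)
     else (1 / sqrt (real (beta_nat p))) *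
       (\<Sum>f \<in> {nu_nat p - int (beta_nat p) div 2 .. nu_nat p + int (beta_nat p) div 2 - 1}.
          exp (2 * pi * \<i> * of_int f * t) *
          exp (- 2 * pi * \<i> * of_int f * of_nat \<tau> / of_nat (beta_nat p))))"

definition DOST :: "int \<Rightarrow> nat \<Rightarrow> real \<Rightarrow> complex" where
  "DOST p \<tau> t = (if p \<ge> 0 then DOST_nat (nat p) \<tau> t else cnj (DOST_nat (nat (-p)) \<tau> t))"

definition DOST_index :: "(int \<times> nat) set" where
  "DOST_index = {(p, \<tau>). \<tau> < beta p}"

abbreviation unit_interval_measure :: "real measure" where
  "unit_interval_measure \<equiv> lebesgue_on {0..1}"

definition L2_01 :: "(real \<Rightarrow> complex) set" where
  "L2_01 = {f. f \<in> borel_measurable unit_interval_measure \<and>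
               integrable unit_interval_measure (\<lambda>t. (norm (f t))^2)}"

definition L2_inner :: "(real \<Rightarrow> complex) \<Rightarrow> (real \<Rightarrow> complex) \<Rightarrow> complex" where
  "L2_inner f g = integral\<^sup>L unit_interval_measure (\<lambda>t. f t * cnj (g t))"

definition L2_orthonormal_basis :: "('i \<Rightarrow> real \<Rightarrow> complex) \<Rightarrow> 'i set \<Rightarrow> bool" where
  "L2_orthonormal_basis e I \<longleftrightarrow>
     (\<forall>i\<in>I. e i \<in> L2_01) \<and>
     (\<forall>i\<in>I. \<forall>j\<in>I. L2_inner (e i) (e j) = (if i = j then 1 else 0)) \<and>
     (\<forall>f\<in>L2_01. (\<forall>i\<in>I. L2_inner f (e i) = 0) \<longrightarrow>
        (AE t in unit_interval_measure. f t = 0))"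

end

theory Submission
  imports Defs "HOL-Analysis.Analysis"
begin

definition ex :: "int \<Rightarrow> real \<Rightarrow> complex" where
  "ex n t = exp (2 * pi * \<i> * of_int n * of_real t)"

lemma ex_cont[continuous_intros]: "continuous_on S (ex n)"
  unfolding ex_def by (intro continuous_intros)

lemma ex_mult: "ex n t * ex m t = ex (n + m) t"
  unfolding ex_def by (simp add: exp_add[symmetric] algebra_simps)

lemma cnj_ex: "cnj (ex n t) = ex (-n) t"
  unfolding ex_def by (simp add: exp_cnj)

lemma norm_ex[simp]: "norm (ex n t) = 1"
  unfolding ex_def by (simp add: norm_exp_eq_Re)

lemma ex_integrable[simp]: "integrable (lebesgue_on {0..1}) (ex n)"
  by (intro continuous_imp_integrable_real ex_cont)

lemma int_ex: "integral\<^sup>L (lebesgue_on {0..1}) (ex k) = (if k = 0 then 1 else 0)"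
proof (cases "k = 0")
  case True
  have "ex 0 = (\<lambda>_. 1)" by (simp add: ex_def fun_eq_iff)
  with True show ?thesis by (simp add: measure_restrict_space)
next
  case False
  define c where "c = 2 * pi * \<i> * of_int k"
  have c0: "c \<noteq> 0" using False by (simp add: c_def)
  have "integral\<^sup>L (lebesgue_on {0..1}) (ex k) = integral {0..1} (ex k)"
    by (intro lebesgue_integral_eq_integral) auto
  also have "\<dots> = integral {0..1} (\<lambda>t. exp(c * complex_of_real t))"
    by (rule arg_cong[where f="integral _"]) (simp add: ex_def c_def mult_ac fun_eq_iff)
  also have "\<dots> = (exp (c * of_real 1) - 1) / c"
    using c0 by (intro integral_exp) auto
  also have "exp c = 1" unfolding c_def
    by (simp add: exp_eq_1)
  then have "(exp (c * of_real 1) - 1) / c = 0" by simp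
  finally show ?thesis using False by simp
qed

lemma rootsum:
  assumes b: "b > 0"
  shows "(\<Sum>j<b. exp (2 * pi * \<i> * of_int k * of_nat j / of_nat b)) =
         (if int b dvd k then of_nat b else (0::complex))"
proof -
  define z where "z = exp (2 * pi * \<i> * of_int k / of_nat b)"
  have e: "exp (2 * pi * \<i> * of_int k * of_nat j / of_nat b) = z ^ j" for j :: nat
    unfolding z_def exp_of_nat_mult[symmetric] by (simp add: mult_ac)
  have zb: "z ^ b = 1"
  proof -
    have "z ^ b = exp (2 * pi * \<i> * of_int k)"
      unfolding z_def exp_of_nat_mult[symmetric] using b by (simp add: field_simps)
    also have "\<dots> = 1" by (simp add: exp_eq_1)
    finally show ?thesis .
  qed
  have z1: "z = 1 \<longleftrightarrow> int b dvd k"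
  proof
    assume "z = 1"
    then obtain n :: int where n: "2 * pi * real_of_int k / real b = real_of_int (2 * n) * pi"
      unfolding z_def exp_eq_1 by auto
    then have "real_of_int k = real_of_int n * real b" using b by (simp add: field_simps)
    then have "k = n * int b" by (metis of_int_eq_iff of_int_mult of_int_of_nat_eq)
    then show "int b dvd k" by simp
  next
    assume "int b dvd k"
    then obtain n where n: "k = int b * n" by auto
    have "z = exp (2 * pi * \<i> * of_int n)" unfolding z_def n using b by (simp add: field_simps)
    also have "\<dots> = 1" by (simp add: exp_eq_1)
    finally show "z = 1" .
  qed
  show ?thesis
    unfolding e using zb z1 by (auto simp: sum_gp_strict)
qed

lemma sum_shift_interval:
  "(\<Sum>f\<in>{a..a + int b - 1}. g f) = (\<Sum>j<b. g (a + int j))"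
proof -
  have "{a..a + int b - 1} = (\<lambda>j. a + int j) ` {..<b}"
  proof safe
    fix x assume x: "x \<in> {a..a + int b - 1}"
    then have "x = a + int (nat (x - a))" "nat (x - a) < b" by auto
    then show "x \<in> (\<lambda>j. a + int j) ` {..<b}" by blast
  qed auto
  moreover have "inj_on (\<lambda>j. a + int j) {..<b}" by (auto simp: inj_on_def)
  ultimately show ?thesis by (simp add: sum.reindex)
qed

definition bandn :: "nat \<Rightarrow> int set" where
  "bandn q = (if q = 0 then {0} else if q = 1 then {1} else
     {nu_nat q - int (beta_nat q) div 2 .. nu_nat q + int (beta_nat q) div 2 - 1})"

definition cfn :: "nat \<Rightarrow> nat \<Rightarrow> int \<Rightarrow> complex" where
  "cfn q \<tau> f = (if q \<le> 1 then 1 else complex_of_real (1 / sqrt (real (beta_nat q))) *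
      exp (- 2 * pi * \<i> * of_int f * of_nat \<tau> / of_nat (beta_nat q)))"

lemma finite_bandn[simp]: "finite (bandn q)"
  by (simp add: bandn_def)

lemma DOST_nat_repr: "DOST_nat q \<tau> t = (\<Sum>f\<in>bandn q. cfn q \<tau> f * ex f t)"
  by (auto simp: DOST_nat_def bandn_def cfn_def ex_def sum_distrib_left mult_ac)

lemma bandn_ge2:
  assumes "q \<ge> 2"
  shows "beta_nat q = 2^(q-1)" "bandn q = {2^(q-1) .. 2^(q-1) + int (beta_nat q) - 1}"
    "bandn q = {2^(q-1) ..< 2^q}"
proof -
  obtain m where m: "q = Suc (Suc m)" using assms by (metis add_2_eq_Suc le_Suc_ex)
  show "beta_nat q = 2^(q-1)" by (simp add: beta_nat_def m)
  show "bandn q = {2^(q-1) .. 2^(q-1) + int (beta_nat q) - 1}"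
    by (simp add: bandn_def beta_nat_def nu_nat_def m)
  show "bandn q = {2^(q-1) ..< 2^q}"
    by (auto simp: bandn_def beta_nat_def nu_nat_def m)
qed

lemma bandn_iff: "f \<in> bandn q \<longleftrightarrow> (if q = 0 then f = 0 else 2^(q-1) \<le> f \<and> f < 2^q)"
proof (cases "q \<ge> 2")
  case True
  then show ?thesis using bandn_ge2(3)[OF True] by auto
next
  case False
  then have "q = 0 \<or> q = 1" by auto
  then show ?thesis by (auto simp: bandn_def)
qed

lemma bandn_disj: "q \<noteq> q' \<Longrightarrow> f \<in> bandn q \<Longrightarrow> f \<in> bandn q' \<Longrightarrow> False"
proof -
  have *: False if "q < q'" "f \<in> bandn q" "f \<in> bandn q'" for q q'
  proof -
    have "q' \<noteq> 0" using that by auto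
    then have f1: "2^(q'-1) \<le> f" using that(3) by (simp add: bandn_iff)
    show False
    proof (cases "q = 0")
      case True
      then show False using that f1 by (simp add: bandn_iff)
    next
      case False
      then have "f < 2^q" using that(2) by (simp add: bandn_iff)
      moreover have "(2::int)^q \<le> 2^(q'-1)" using that(1) by (intro power_increasing) auto
      ultimately show False using f1 by simp
    qed
  qed
  assume "q \<noteq> q'" "f \<in> bandn q" "f \<in> bandn q'"
  then show False using *[of q q'] *[of q' q] by (cases "q < q'") auto
qed

lemma bandn_nonneg: assumes "f \<in> bandn q" shows "f \<ge> 0"
proof (cases "q = 0")
  case True then show ?thesis using assms by (simp add: bandn_iff)
next
  case False
  have "(2::int)^(q-1) \<le> f" using assms False unfolding bandn_iff by simp
  moreover have "(0::int) < 2^(q-1)" by simp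
  ultimately show ?thesis by linarith
qed

lemma bandn_pos: assumes "f \<in> bandn q" "q \<noteq> 0" shows "f > 0"
proof -
  have "(2::int)^(q-1) \<le> f" using assms unfolding bandn_iff by simp
  moreover have "(0::int) < 2^(q-1)" by simp
  ultimately show ?thesis by linarith
qed

lemma bandn_exists: "n \<ge> 0 \<Longrightarrow> \<exists>q. n \<in> bandn q"
proof (cases "n \<le> 0")
  case True
  assume "n \<ge> 0"
  with True have "n \<in> bandn 0" by (simp add: bandn_def)
  then show ?thesis by blast
next
  case False
  define m where "m = nat n"
  have n: "n = int m" "m \<ge> 1" using False by (auto simp: m_def)
  have "\<exists>k. m < 2^k" by (metis less_exp)
  define k where "k = (LEAST k. m < 2^k)"
  have k1: "m < 2^k" unfolding k_def by (metis LeastI_ex \<open>\<exists>k. m < 2^k\<close>)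
  have k0: "k \<noteq> 0" using k1 n by (cases "k = 0") auto
  have "\<not> m < 2^(k-1)" unfolding k_def
    by (metis Least_le k0 k_def diff_less not_le zero_less_iff_neq_zero less_one)
  then have "2^(k-1) \<le> m" by simp
  then have "n \<in> bandn k" using k1 k0 n unfolding bandn_iff
    by (metis of_nat_le_iff of_nat_less_iff of_nat_numeral of_nat_power)
  then show ?thesis by blast
qed

lemma cfn_prod:
  assumes "q \<ge> 2"
  shows "cfn q \<tau> f * cnj (cfn q \<tau>' f) =
    complex_of_real (1 / real (beta_nat q)) *
      exp (2 * pi * \<i> * of_int (f * (int \<tau>' - int \<tau>)) / of_nat (beta_nat q))"
proof -
  define b where "b = beta_nat q"
  have b0: "b > 0" using assms by (simp add: b_def bandn_ge2)
  have bc: "(of_nat b :: complex) \<noteq> 0" using b0 by simp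
  have "cfn q \<tau> f * cnj (cfn q \<tau>' f) =
     complex_of_real (1 / sqrt (real b)) * complex_of_real (1 / sqrt (real b)) *
     (exp (- 2 * pi * \<i> * of_int f * of_nat \<tau> / of_nat b) *
      exp (2 * pi * \<i> * of_int f * of_nat \<tau>' / of_nat b))"
    using assms by (simp add: cfn_def b_def exp_cnj)
  also have "complex_of_real (1 / sqrt (real b)) * complex_of_real (1 / sqrt (real b)) =
      complex_of_real (1 / real b)"
    using b0 by (simp flip: of_real_mult)
  also have "exp (- 2 * pi * \<i> * of_int f * of_nat \<tau> / of_nat b) *
      exp (2 * pi * \<i> * of_int f * of_nat \<tau>' / of_nat b) =
      exp (2 * pi * \<i> * of_int (f * (int \<tau>' - int \<tau>)) / of_nat b)"
  proof -
    have "- 2 * pi * \<i> * of_int f * of_nat \<tau> / of_nat b + 2 * pi * \<i> * of_int f * of_nat \<tau>' / of_nat b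
        = 2 * pi * \<i> * of_int (f * (int \<tau>' - int \<tau>)) / (of_nat b :: complex)"
      by (simp add: divide_inverse algebra_simps)
    then show ?thesis by (simp flip: exp_add)
  qed
  finally show ?thesis by (simp add: b_def)
qed

lemma cfn_orth:
  assumes "\<tau> < beta_nat q" "\<tau>' < beta_nat q"
  shows "(\<Sum>f\<in>bandn q. cfn q \<tau> f * cnj (cfn q \<tau>' f)) = (if \<tau> = \<tau>' then 1 else 0)"
proof (cases "q \<ge> 2")
  case False
  then have "q = 0 \<or> q = 1" by auto
  then show ?thesis using assms by (auto simp: bandn_def cfn_def beta_nat_def)
next
  case True
  define b where "b = beta_nat q"
  define a :: int where "a = 2^(q-1)"
  define k where "k = int \<tau>' - int \<tau>"
  have b0: "b > 0" using True by (simp add: b_def bandn_ge2)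
  have bc: "(of_nat b :: complex) \<noteq> 0" using b0 by simp
  have "(\<Sum>f\<in>bandn q. cfn q \<tau> f * cnj (cfn q \<tau>' f)) =
     (\<Sum>j<b. cfn q \<tau> (a + int j) * cnj (cfn q \<tau>' (a + int j)))"
    unfolding bandn_ge2(2)[OF True] a_def b_def by (rule sum_shift_interval)
  also have "\<dots> = (\<Sum>j<b. complex_of_real (1 / real b) * exp (2 * pi * \<i> * of_int (a * k) / of_nat b) *
       exp (2 * pi * \<i> * of_int k * of_nat j / of_nat b))"
  proof (intro sum.cong refl)
    fix j assume "j \<in> {..<b}"
    have "2 * pi * \<i> * of_int ((a + int j) * k) / of_nat b =
      2 * pi * \<i> * of_int (a * k) / of_nat b + 2 * pi * \<i> * of_int k * of_nat j / (of_nat b :: complex)"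
      by (simp add: divide_inverse algebra_simps)
    then show "cfn q \<tau> (a + int j) * cnj (cfn q \<tau>' (a + int j)) =
      complex_of_real (1 / real b) * exp (2 * pi * \<i> * of_int (a * k) / of_nat b) *
       exp (2 * pi * \<i> * of_int k * of_nat j / of_nat b)"
      unfolding cfn_prod[OF True] b_def[symmetric] k_def[symmetric]
      by (simp add: exp_add[symmetric] mult.assoc)
  qed
  also have "\<dots> = complex_of_real (1 / real b) * exp (2 * pi * \<i> * of_int (a * k) / of_nat b) *
       (if int b dvd k then of_nat b else 0)"
    unfolding sum_distrib_left[symmetric] rootsum[OF b0] by simp
  also have "int b dvd k \<longleftrightarrow> \<tau> = \<tau>'"
  proof
    assume "int b dvd k"
    moreover have "\<bar>k\<bar> < int b" using assms by (auto simp: k_def b_def)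
    ultimately have "k = 0" using dvd_imp_le_int[of k "int b"] by linarith
    then show "\<tau> = \<tau>'" by (simp add: k_def)
  qed (simp add: k_def)
  finally show ?thesis using b0 by (auto simp: k_def)
qed

lemma cfn_inv:
  assumes "n \<in> bandn q"
  shows "\<exists>d. \<forall>t. ex n t = (\<Sum>\<tau><beta_nat q. d \<tau> * DOST_nat q \<tau> t)"
proof (cases "q \<ge> 2")
  case False
  then have "q = 0 \<or> q = 1" by auto
  then show ?thesis using assms
    by (intro exI[of _ "\<lambda>_. 1"]) (auto simp: bandn_def cfn_def beta_nat_def DOST_nat_repr)
next
  case True
  define b where "b = beta_nat q"
  have b0: "b > 0" using True by (simp add: b_def bandn_ge2)
  have bc: "(of_nat b :: complex) \<noteq> 0" using b0 by simp
  define d where "d \<tau> = complex_of_real (1 / sqrt (real b)) * exp (2 * pi * \<i> * of_int n * of_nat \<tau> / of_nat b)" for \<tau> :: nat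
  have key: "(\<Sum>\<tau><b. d \<tau> * cfn q \<tau> f) = (if f = n then 1 else 0)" if f: "f \<in> bandn q" for f
  proof -
    have "(\<Sum>\<tau><b. d \<tau> * cfn q \<tau> f) = (\<Sum>\<tau><b. complex_of_real (1 / real b) *
        exp (2 * pi * \<i> * of_int (n - f) * of_nat \<tau> / of_nat b))"
    proof (intro sum.cong refl)
      fix \<tau> assume "\<tau> \<in> {..<b}"
      have "complex_of_real (1 / sqrt (real b)) * complex_of_real (1 / sqrt (real b)) =
        complex_of_real (1 / real b)"
        using b0 by (simp flip: of_real_mult)
      moreover have "exp (2 * pi * \<i> * of_int n * of_nat \<tau> / of_nat b) *
          exp (- 2 * pi * \<i> * of_int f * of_nat \<tau> / of_nat b) =
          exp (2 * pi * \<i> * of_int (n - f) * of_nat \<tau> / of_nat b)"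
      proof -
        have "2 * pi * \<i> * of_int n * of_nat \<tau> / of_nat b + (- 2 * pi * \<i> * of_int f * of_nat \<tau> / of_nat b) =
          2 * pi * \<i> * of_int (n - f) * of_nat \<tau> / (of_nat b :: complex)"
          by (simp add: divide_inverse algebra_simps)
        then show ?thesis by (simp flip: exp_add)
      qed
      ultimately show "d \<tau> * cfn q \<tau> f = complex_of_real (1 / real b) *
        exp (2 * pi * \<i> * of_int (n - f) * of_nat \<tau> / of_nat b)"
        using True by (simp add: d_def cfn_def b_def[symmetric])
    qed
    also have "\<dots> = complex_of_real (1 / real b) * (if int b dvd (n - f) then of_nat b else 0)"
      unfolding sum_distrib_left[symmetric] rootsum[OF b0] by simp
    also have "int b dvd (n - f) \<longleftrightarrow> f = n"
    proof
      assume "int b dvd (n - f)"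
      moreover have "\<bar>n - f\<bar> < int b"
        using f assms unfolding bandn_ge2(2)[OF True] b_def by auto
      ultimately have "n - f = 0" using dvd_imp_le_int[of "n - f" "int b"] by linarith
      then show "f = n" by simp
    qed simp
    finally show ?thesis using b0 by auto
  qed
  show ?thesis
  proof (intro exI allI)
    fix t
    have "(\<Sum>\<tau><beta_nat q. d \<tau> * DOST_nat q \<tau> t) =
        (\<Sum>f\<in>bandn q. (\<Sum>\<tau><b. d \<tau> * cfn q \<tau> f) * ex f t)"
      unfolding DOST_nat_repr b_def[symmetric]
      by (simp add: sum_distrib_left sum_distrib_right mult_ac sum.swap[of _ "{..<b}"])
    also have "\<dots> = (\<Sum>f\<in>bandn q. (if f = n then ex f t else 0))"
      by (intro sum.cong refl) (simp add: key)
    also have "\<dots> = ex n t" using assms by simp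
    finally show "ex n t = (\<Sum>\<tau><beta_nat q. d \<tau> * DOST_nat q \<tau> t)" by simp
  qed
qed

definition band :: "int \<Rightarrow> int set" where
  "band p = (if 0 \<le> p then bandn (nat p) else uminus ` bandn (nat (-p)))"

definition cf :: "int \<Rightarrow> nat \<Rightarrow> int \<Rightarrow> complex" where
  "cf p \<tau> f = (if 0 \<le> p then cfn (nat p) \<tau> f else cnj (cfn (nat (-p)) \<tau> (-f)))"

lemma finite_band[simp]: "finite (band p)" by (simp add: band_def)

lemma DOST_repr: "DOST p \<tau> t = (\<Sum>f\<in>band p. cf p \<tau> f * ex f t)"
proof (cases "0 \<le> p")
  case True then show ?thesis by (simp add: DOST_def band_def cf_def DOST_nat_repr)
next
  case False
  have "DOST p \<tau> t = (\<Sum>f\<in>bandn (nat (-p)). cnj (cfn (nat (-p)) \<tau> f) * ex (-f) t)"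
    using False by (simp add: DOST_def DOST_nat_repr cnj_ex)
  also have "\<dots> = (\<Sum>f\<in>uminus ` bandn (nat (-p)). cnj (cfn (nat (-p)) \<tau> (-f)) * ex f t)"
    by (subst sum.reindex) (auto simp: inj_on_def)
  finally show ?thesis using False by (simp add: band_def cf_def)
qed

lemma band_disj: "p \<noteq> p' \<Longrightarrow> band p \<inter> band p' = {}"
proof -
  have neg: "f \<in> band p \<Longrightarrow> p < 0 \<Longrightarrow> f < 0" for f p
    using bandn_pos[of "-f" "nat (-p)"] by (auto simp: band_def)
  have pos: "f \<in> band p \<Longrightarrow> p \<ge> 0 \<Longrightarrow> f \<ge> 0" for f p
    using bandn_nonneg[of f "nat p"] by (auto simp: band_def)
  assume ne: "p \<noteq> p'"
  show ?thesis
  proof (rule ccontr)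
    assume "band p \<inter> band p' \<noteq> {}"
    then obtain f where f: "f \<in> band p" "f \<in> band p'" by auto
    consider "p \<ge> 0" "p' \<ge> 0" | "p < 0" "p' < 0" | "p \<ge> 0" "p' < 0" | "p < 0" "p' \<ge> 0" by linarith
    then show False
    proof cases
      case 1
      then have "nat p \<noteq> nat p'" using ne by simp
      then show False using f 1 bandn_disj[of "nat p" "nat p'" f] by (auto simp: band_def)
    next
      case 2
      then have "nat (-p) \<noteq> nat (-p')" using ne by simp
      then show False using f 2 bandn_disj[of "nat (-p)" "nat (-p')" "-f"] by (auto simp: band_def)
    qed (use f neg pos in fastforce)+
  qed
qed

lemma cf_orth:
  assumes "\<tau> < beta p" "\<tau>' < beta p"
  shows "(\<Sum>f\<in>band p. cf p \<tau> f * cnj (cf p \<tau>' f)) = (if \<tau> = \<tau>' then 1 else 0)"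
proof (cases "0 \<le> p")
  case True
  then show ?thesis using assms cfn_orth[of \<tau> "nat p" \<tau>']
    by (simp add: band_def cf_def beta_def)
next
  case False
  have "(\<Sum>f\<in>band p. cf p \<tau> f * cnj (cf p \<tau>' f)) =
     (\<Sum>f\<in>uminus ` bandn (nat (-p)). cnj (cfn (nat (-p)) \<tau> (-f)) * cfn (nat (-p)) \<tau>' (-f))"
    using False by (simp add: band_def cf_def)
  also have "\<dots> = (\<Sum>f\<in>bandn (nat (-p)). cnj (cfn (nat (-p)) \<tau> f) * cfn (nat (-p)) \<tau>' f)"
    by (subst sum.reindex) (auto simp: inj_on_def)
  also have "\<dots> = cnj (\<Sum>f\<in>bandn (nat (-p)). cfn (nat (-p)) \<tau> f * cnj (cfn (nat (-p)) \<tau>' f))"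
    by (simp add: mult.commute)
  also have "\<dots> = (if \<tau> = \<tau>' then 1 else 0)"
    using assms False cfn_orth[of \<tau> "nat (-p)" \<tau>'] by (simp add: beta_def)
  finally show ?thesis .
qed

lemma ex_inv:
  "\<exists>p d. \<forall>t. ex n t = (\<Sum>\<tau><beta p. d \<tau> * DOST p \<tau> t)"
proof (cases "n \<ge> 0")
  case True
  then obtain q where q: "n \<in> bandn q" using bandn_exists by blast
  then obtain d where d: "\<And>t. ex n t = (\<Sum>\<tau><beta_nat q. d \<tau> * DOST_nat q \<tau> t)"
    using cfn_inv by blast
  show ?thesis
    by (intro exI[of _ "int q"] exI[of _ d]) (simp add: d DOST_def beta_def)
next
  case False
  then obtain q where q: "-n \<in> bandn q" using bandn_exists[of "-n"] by auto
  then obtain d where d: "\<And>t. ex (-n) t = (\<Sum>\<tau><beta_nat q. d \<tau> * DOST_nat q \<tau> t)"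
    using cfn_inv by blast
  have q0: "q \<noteq> 0" using q False by (auto simp: bandn_def split: if_splits)
  have "ex n t = cnj (ex (-n) t)" for t by (simp add: cnj_ex)
  then show ?thesis using q0
    by (intro exI[of _ "- int q"] exI[of _ "\<lambda>\<tau>. cnj (d \<tau>)"]) (simp add: d DOST_def beta_def)
qed

lemma DOST_cont: "continuous_on S (DOST p \<tau>)"
proof -
  have "DOST p \<tau> = (\<lambda>t. \<Sum>f\<in>band p. cf p \<tau> f * ex f t)" by (simp add: fun_eq_iff DOST_repr)
  then show ?thesis by (simp add: continuous_intros)
qed

lemma cont_L2: "continuous_on {0..1} g \<Longrightarrow> g \<in> L2_01"
  unfolding L2_01_def
  by (auto intro!: continuous_imp_measurable_on_sets_lebesgue continuous_imp_integrable_real continuous_intros)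

lemma L2_integrable: "f \<in> L2_01 \<Longrightarrow> integrable unit_interval_measure f"
proof -
  assume f: "f \<in> L2_01"
  have i: "integrable unit_interval_measure (\<lambda>t. 1 + (norm (f t))^2)"
    using f unfolding L2_01_def
    by (intro Bochner_Integration.integrable_add) (auto intro: continuous_imp_integrable_real)
  show ?thesis
  proof (rule Bochner_Integration.integrable_bound[OF i])
    show "f \<in> borel_measurable unit_interval_measure" using f by (simp add: L2_01_def)
    show "AE x in unit_interval_measure. norm (f x) \<le> norm (1 + (norm (f x))\<^sup>2)"
    proof (rule AE_I2)
      fix x
      have "norm (f x) \<le> 1 + (norm (f x))\<^sup>2"
      proof (cases "norm (f x) \<le> 1")
        case True then show ?thesis by (simp add: add_increasing2)
      next
        case False then have "norm (f x) \<le> norm (f x) * norm (f x)" by (simp add: mult_le_cancel_left1)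
        then show ?thesis by (simp add: power2_eq_square)
      qed
      then show "norm (f x) \<le> norm (1 + (norm (f x))\<^sup>2)" by simp
    qed
  qed
qed

lemma int_mult_cont:
  fixes f g :: "real \<Rightarrow> complex"
  assumes f: "integrable unit_interval_measure f" and g: "continuous_on {0..1} g"
  shows "integrable unit_interval_measure (\<lambda>t. f t * g t)"
proof -
  have "bounded (g ` {0..1})" by (intro compact_imp_bounded compact_continuous_image g) auto
  then obtain B where B: "B > 0" "\<And>x. x \<in> {0..1} \<Longrightarrow> norm (g x) \<le> B"
    by (auto simp: bounded_pos)
  have i: "integrable unit_interval_measure (\<lambda>t. of_real B * f t)" using f by simp
  show ?thesis
  proof (rule Bochner_Integration.integrable_bound[OF i])
    show "(\<lambda>t. f t * g t) \<in> borel_measurable unit_interval_measure"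
      using f g by (intro borel_measurable_times borel_measurable_integrable continuous_imp_measurable_on_sets_lebesgue) auto
    show "AE x in unit_interval_measure. norm (f x * g x) \<le> norm (complex_of_real B * f x)"
    proof (rule AE_I2)
      fix x assume "x \<in> space unit_interval_measure"
      then have "norm (g x) \<le> B" using B by auto
      then show "norm (f x * g x) \<le> norm (complex_of_real B * f x)"
        using B by (simp add: norm_mult) (metis mult.commute mult_left_mono norm_ge_zero)
    qed
  qed
qed

lemma inner_sums:
  assumes "finite A" "finite B"
  shows "L2_inner (\<lambda>t. \<Sum>f\<in>A. a f * ex f t) (\<lambda>t. \<Sum>g\<in>B. c g * ex g t) =
    (\<Sum>f\<in>A. \<Sum>g\<in>B. a f * cnj (c g) * (if f = g then 1 else 0))"
proof -
  have "L2_inner (\<lambda>t. \<Sum>f\<in>A. a f * ex f t) (\<lambda>t. \<Sum>g\<in>B. c g * ex g t) =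
     integral\<^sup>L unit_interval_measure (\<lambda>t. \<Sum>f\<in>A. \<Sum>g\<in>B. a f * cnj (c g) * ex (f - g) t)"
    unfolding L2_inner_def
  proof (intro Bochner_Integration.integral_cong refl)
    fix t
    have "ex (f - g) t = ex f t * ex (-g) t" for f g by (simp add: ex_mult)
    then show "(\<Sum>f\<in>A. a f * ex f t) * cnj (\<Sum>g\<in>B. c g * ex g t) =
      (\<Sum>f\<in>A. \<Sum>g\<in>B. a f * cnj (c g) * ex (f - g) t)"
      by (simp add: sum_product cnj_ex mult_ac)
  qed
  also have "\<dots> = (\<Sum>f\<in>A. \<Sum>g\<in>B. a f * cnj (c g) * integral\<^sup>L unit_interval_measure (ex (f - g)))"
    by (simp add: Bochner_Integration.integral_sum)
  also have "\<dots> = (\<Sum>f\<in>A. \<Sum>g\<in>B. a f * cnj (c g) * (if f = g then 1 else 0))"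
    by (simp add: int_ex)
  finally show ?thesis .
qed

lemma inner_sum_right:
  assumes "integrable unit_interval_measure h" "\<And>i. i \<in> I \<Longrightarrow> continuous_on {0..1} (g i)"
  shows "L2_inner h (\<lambda>t. \<Sum>i\<in>I. d i * g i t) = (\<Sum>i\<in>I. cnj (d i) * L2_inner h (g i))"
proof -
  have "L2_inner h (\<lambda>t. \<Sum>i\<in>I. d i * g i t) =
     integral\<^sup>L unit_interval_measure (\<lambda>t. \<Sum>i\<in>I. cnj (d i) * (h t * cnj (g i t)))"
    unfolding L2_inner_def
    by (intro Bochner_Integration.integral_cong refl) (simp add: sum_distrib_left mult_ac)
  also have "\<dots> = (\<Sum>i\<in>I. cnj (d i) * L2_inner h (g i))"
    unfolding L2_inner_def
    by (subst Bochner_Integration.integral_sum)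
       (auto intro!: integrable_mult_right int_mult_cont[OF assms(1)] continuous_on_cnj assms(2))
  finally show ?thesis .
qed

definition trig :: "(real \<Rightarrow> complex) \<Rightarrow> bool" where
  "trig h \<longleftrightarrow> (\<exists>S c. finite S \<and> h = (\<lambda>t. \<Sum>n\<in>S. c n * ex n t))"

lemma trig_single: "trig (\<lambda>t. a * ex k t)"
  unfolding trig_def by (intro exI[of _ "{k}"] exI[of _ "\<lambda>_. a"]) auto

lemma trig_const: "trig (\<lambda>t. a)"
proof -
  have "ex 0 t = 1" for t by (simp add: ex_def)
  then show ?thesis using trig_single[of a 0] by simp
qed

lemma trig_add:
  assumes "trig g" "trig h" shows "trig (\<lambda>t. g t + h t)"
proof -
  obtain S c where S: "finite S" "g = (\<lambda>t. \<Sum>n\<in>S. c n * ex n t)" using assms(1) trig_def by auto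
  obtain T d where T: "finite T" "h = (\<lambda>t. \<Sum>n\<in>T. d n * ex n t)" using assms(2) trig_def by auto
  define e where "e n = (if n \<in> S then c n else 0) + (if n \<in> T then d n else 0)" for n
  have 1: "(\<Sum>n\<in>S. c n * ex n t) = (\<Sum>n\<in>S \<union> T. (if n \<in> S then c n else 0) * ex n t)" for t
    by (rule sum.mono_neutral_cong_left) (use S T in auto)
  have 2: "(\<Sum>n\<in>T. d n * ex n t) = (\<Sum>n\<in>S \<union> T. (if n \<in> T then d n else 0) * ex n t)" for t
    by (rule sum.mono_neutral_cong_left) (use S T in auto)
  show ?thesis unfolding trig_def
    by (intro exI[of _ "S \<union> T"] exI[of _ e])
       (use S T in \<open>auto simp: 1 2 e_def distrib_right sum.distrib\<close>)
qed

lemma trig_sum: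
  assumes "finite I" "\<And>i. i \<in> I \<Longrightarrow> trig (g i)"
  shows "trig (\<lambda>t. \<Sum>i\<in>I. g i t)"
  using assms
proof (induction I rule: finite_induct)
  case empty then show ?case using trig_const[of 0] by simp
next
  case (insert x F)
  then show ?case by (simp add: trig_add)
qed

lemma trig_mult:
  assumes "trig g" "trig h" shows "trig (\<lambda>t. g t * h t)"
proof -
  obtain S c where S: "finite S" "g = (\<lambda>t. \<Sum>n\<in>S. c n * ex n t)" using assms(1) trig_def by auto
  obtain T d where T: "finite T" "h = (\<lambda>t. \<Sum>n\<in>T. d n * ex n t)" using assms(2) trig_def by auto
  have "(\<lambda>t. g t * h t) = (\<lambda>t. \<Sum>n\<in>S. \<Sum>m\<in>T. (c n * d m) * ex (n + m) t)"
    by (simp add: S T fun_eq_iff sum_product ex_mult[symmetric] mult_ac)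
  moreover have "trig (\<lambda>t. \<Sum>n\<in>S. \<Sum>m\<in>T. (c n * d m) * ex (n + m) t)"
    using S T by (intro trig_sum trig_single) auto
  ultimately show ?thesis by simp
qed

lemma trig_cont: "trig h \<Longrightarrow> continuous_on S h"
  unfolding trig_def by (auto intro!: continuous_intros)

lemma trig_ortho:
  assumes f: "integrable unit_interval_measure f" and o: "\<And>n. L2_inner f (ex n) = 0"
    and h: "trig h"
  shows "integral\<^sup>L unit_interval_measure (\<lambda>t. f t * h t) = 0"
proof -
  obtain S c where S: "finite S" "h = (\<lambda>t. \<Sum>n\<in>S. c n * ex n t)" using h trig_def by auto
  have "integral\<^sup>L unit_interval_measure (\<lambda>t. f t * h t) =
     integral\<^sup>L unit_interval_measure (\<lambda>t. \<Sum>n\<in>S. c n * (f t * cnj (ex (-n) t)))"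
    by (intro Bochner_Integration.integral_cong refl) (simp add: S sum_distrib_left cnj_ex mult_ac)
  also have "\<dots> = (\<Sum>n\<in>S. c n * L2_inner f (ex (-n)))"
    unfolding L2_inner_def
    by (subst Bochner_Integration.integral_sum)
       (auto intro!: integrable_mult_right int_mult_cont[OF f] continuous_on_cnj ex_cont)
  also have "\<dots> = 0" by (simp add: o)
  finally show ?thesis .
qed

lemma trig_poly:
  fixes p :: "complex \<Rightarrow> real"
  assumes "real_polynomial_function p"
  shows "trig (\<lambda>t. complex_of_real (p (ex 1 t)))"
  using assms
proof (induction p rule: real_polynomial_function.induct)
  case (linear l)
  then interpret l: bounded_linear l .
  have "l z = Re z * l 1 + Im z * l \<i>" for z
  proof -
    have "z = Re z *\<^sub>R 1 + Im z *\<^sub>R \<i>" by (simp add: complex_eq_iff)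
    then have "l z = l (Re z *\<^sub>R 1 + Im z *\<^sub>R \<i>)" by simp
    also have "\<dots> = Re z * l 1 + Im z * l \<i>" by (simp add: l.add l.scale)
    finally show ?thesis .
  qed
  note leq = this
  have "complex_of_real (l (ex 1 t)) =
      (1 * ex 1 t + 1 * ex (-1) t) * (of_real (l 1) / 2) +
      (1 * ex 1 t + (-1) * ex (-1) t) * (of_real (l \<i>) / (2 * \<i>))" for t
  proof -
    define w where "w = ex 1 t"
    have cw: "cnj w = ex (-1) t" by (simp add: w_def cnj_ex)
    have "complex_of_real (l w) = complex_of_real (Re w) * of_real (l 1) + complex_of_real (Im w) * of_real (l \<i>)"
      by (simp only: leq[of w] of_real_add of_real_mult)
    also have "complex_of_real (Re w) = (w + cnj w) / 2" by (simp add: complex_add_cnj)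
    also have "complex_of_real (Im w) = (w - cnj w) / (2 * \<i>)" by (simp add: complex_diff_cnj complex_eq_iff)
    finally show ?thesis unfolding w_def[symmetric] cw[symmetric] by simp
  qed
  moreover have "trig (\<lambda>t. (1 * ex 1 t + 1 * ex (-1) t) * (of_real (l 1) / 2) +
      (1 * ex 1 t + (-1) * ex (-1) t) * (of_real (l \<i>) / (2 * \<i>)))"
    by (intro trig_add trig_mult trig_single trig_const)
  ultimately show ?case by simp
next
  case (const c) then show ?case by (rule trig_const)
next
  case (add f g) then show ?case by (simp add: trig_add)
next
  case (mult f g) then show ?case by (simp add: trig_mult)
qed

lemma ex1_sphere: "ex 1 t \<in> sphere 0 1"
  by simp

lemma cont_ortho:
  fixes G :: "complex \<Rightarrow> real"
  assumes f: "integrable unit_interval_measure f" and o: "\<And>n. L2_inner f (ex n) = 0"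
    and G: "continuous_on (sphere 0 1) G"
  shows "integral\<^sup>L unit_interval_measure (\<lambda>t. f t * complex_of_real (G (ex 1 t))) = 0"
proof -
  let ?M = unit_interval_measure
  let ?I = "integral\<^sup>L ?M (\<lambda>t. f t * complex_of_real (G (ex 1 t)))"
  define C where "C = integral\<^sup>L ?M (\<lambda>t. norm (f t))"
  have C0: "C \<ge> 0" unfolding C_def by simp
  have cG: "continuous_on {0..1} (\<lambda>t. complex_of_real (G (ex 1 t)))"
    by (intro continuous_on_of_real continuous_on_compose2[OF G] ex_cont) auto
  have bound: "norm ?I \<le> e * C" if e: "e > 0" for e
  proof -
    obtain g where g: "polynomial_function g" "\<And>x. x \<in> sphere 0 1 \<Longrightarrow> norm (G x - g x) < e"
      using Stone_Weierstrass_polynomial_function[OF compact_sphere G e] by blast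
    have "real_polynomial_function g" using g(1) by (simp add: real_polynomial_function_eq)
    then have tr: "trig (\<lambda>t. complex_of_real (g (ex 1 t)))" by (rule trig_poly)
    have z: "integral\<^sup>L ?M (\<lambda>t. f t * complex_of_real (g (ex 1 t))) = 0"
      by (rule trig_ortho[OF f o tr])
    have i1: "integrable ?M (\<lambda>t. f t * complex_of_real (G (ex 1 t)))"
      by (rule int_mult_cont[OF f cG])
    have i2: "integrable ?M (\<lambda>t. f t * complex_of_real (g (ex 1 t)))"
      by (rule int_mult_cont[OF f trig_cont[OF tr]])
    have "?I = integral\<^sup>L ?M (\<lambda>t. f t * complex_of_real (G (ex 1 t))) -
        integral\<^sup>L ?M (\<lambda>t. f t * complex_of_real (g (ex 1 t)))" using z by simp
    also have "\<dots> = integral\<^sup>L ?M (\<lambda>t. f t * complex_of_real (G (ex 1 t) - g (ex 1 t)))"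
      using i1 i2 by (simp add: algebra_simps)
    finally have eq: "?I = \<dots>" .
    have "norm ?I \<le> integral\<^sup>L ?M (\<lambda>t. norm (f t * complex_of_real (G (ex 1 t) - g (ex 1 t))))"
      unfolding eq by (rule integral_norm_bound)
    also have "\<dots> \<le> integral\<^sup>L ?M (\<lambda>t. e * norm (f t))"
    proof (rule integral_mono)
      show "integrable ?M (\<lambda>t. norm (f t * complex_of_real (G (ex 1 t) - g (ex 1 t))))"
        using i1 i2 by (intro integrable_norm) (simp add: algebra_simps)
      show "integrable ?M (\<lambda>t. e * norm (f t))" using f by simp
      fix t
      have "\<bar>G (ex 1 t) - g (ex 1 t)\<bar> < e" using g(2)[OF ex1_sphere] by simp
      then have "\<bar>G (ex 1 t) - g (ex 1 t)\<bar> \<le> e" by simp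
      then show "norm (f t * complex_of_real (G (ex 1 t) - g (ex 1 t))) \<le> e * norm (f t)"
        by (simp add: norm_mult of_real_diff[symmetric] del: of_real_diff)
           (metis mult.commute mult_left_mono norm_ge_zero)
    qed
    also have "\<dots> = e * C" by (simp add: C_def)
    finally show ?thesis .
  qed
  show ?thesis
  proof (rule ccontr)
    assume ne: "?I \<noteq> 0"
    define e where "e = norm ?I / (C + 1)"
    have e0: "e > 0" using ne C0 by (simp add: e_def)
    have "norm ?I \<le> e * C" by (rule bound[OF e0])
    also have "\<dots> < norm ?I"
      using ne C0 by (simp add: e_def field_simps)
    finally show False by simp
  qed
qed

lemma ex1_inj:
  assumes "0 < t" "t < 1" "0 \<le> s" "s \<le> 1" "ex 1 t = ex 1 s"
  shows "s = t"
proof -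
  have "exp (2 * pi * \<i> * of_real (t - s)) = ex 1 t / ex 1 s"
    by (simp add: ex_def exp_diff[symmetric] algebra_simps)
  also have "\<dots> = 1" using assms(5) by (simp add: ex_def)
  finally obtain n :: int where n: "2 * pi * (t - s) = real_of_int (2 * n) * pi"
    unfolding exp_eq_1 by auto
  then have "(t - s) * (2 * pi) = real_of_int n * (2 * pi)" by (simp add: algebra_simps)
  then have "t - s = real_of_int n" using pi_gt_zero by simp
  moreover have "\<bar>t - s\<bar> < 1" using assms by auto
  ultimately have "n = 0" by linarith
  then show ?thesis using \<open>t - s = real_of_int n\<close> by simp
qed

lemma interval_ortho:
  assumes f: "integrable unit_interval_measure f" and o: "\<And>n. L2_inner f (ex n) = 0"
    and ab: "0 < a" "a < b" "b < 1"
  shows "integral\<^sup>L unit_interval_measure (\<lambda>t. f t * indicator {a<..<b} t) = 0"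
proof -
  let ?M = unit_interval_measure
  define K where "K = ex 1 ` ({0..1} - {a<..<b})"
  have cK: "closed K" unfolding K_def
    by (intro compact_imp_closed compact_continuous_image ex_cont compact_diff) auto
  have "(0::real) \<in> {0..1} - {a<..<b}" using ab by auto
  then have K0: "K \<noteq> {}" unfolding K_def by blast
  define G where "G k z = min 1 (real k * infdist z K)" for k :: nat and z
  have Gc: "continuous_on (sphere 0 1) (G k)" for k
    unfolding G_def by (intro continuous_intros)
  have G01: "0 \<le> G k z" "G k z \<le> 1" for k z
    unfolding G_def by (auto simp: infdist_nonneg)
  define s where "s k t = f t * complex_of_real (G k (ex 1 t))" for k t
  have s0: "integral\<^sup>L ?M (s k) = 0" for k
    unfolding s_def by (rule cont_ortho[OF f o Gc])
  have si: "integrable ?M (s k)" for k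
    unfolding s_def
    by (rule int_mult_cont[OF f], intro continuous_on_of_real continuous_on_compose2[OF Gc] ex_cont) auto
  have sp: "space ?M = {0..1}" by simp
  have lim: "(\<lambda>k. s k t) \<longlonglongrightarrow> f t * indicator {a<..<b} t" if t: "t \<in> space ?M" for t
  proof (cases "t \<in> {a<..<b}")
    case True
    have "ex 1 t \<notin> K"
    proof
      assume "ex 1 t \<in> K"
      then obtain u where u: "u \<in> {0..1}" "u \<notin> {a<..<b}" "ex 1 t = ex 1 u" by (auto simp: K_def)
      then have "u = t" using ex1_inj[of t u] True ab by auto
      then show False using u True by simp
    qed
    then have d: "infdist (ex 1 t) K > 0" using cK K0 by (rule_tac infdist_pos_not_in_closed) auto
    then obtain N :: nat where N: "1 < real N * infdist (ex 1 t) K" using reals_Archimedean3 by blast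
    have "eventually (\<lambda>k. s k t = f t * indicator {a<..<b} t) sequentially"
      unfolding eventually_sequentially
    proof (intro exI allI impI)
      fix k assume "N \<le> k"
      then have "real N * infdist (ex 1 t) K \<le> real k * infdist (ex 1 t) K"
        using d by (intro mult_right_mono) auto
      then have "G k (ex 1 t) = 1" using N by (simp add: G_def)
      then show "s k t = f t * indicator {a<..<b} t" using True by (simp add: s_def)
    qed
    then show ?thesis by (rule tendsto_eventually)
  next
    case False
    then have "ex 1 t \<in> K" using t by (auto simp: K_def)
    then have "s k t = f t * indicator {a<..<b} t" for k using False by (simp add: s_def G_def)
    then show ?thesis by simp
  qed
  have meas: "(\<lambda>t. f t * indicator {a<..<b} t) \<in> borel_measurable ?M"
    by (rule borel_measurable_LIMSEQ_metric[OF _ lim]) (auto intro: borel_measurable_integrable si)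
  have "(\<lambda>k. integral\<^sup>L ?M (s k)) \<longlonglongrightarrow> integral\<^sup>L ?M (\<lambda>t. f t * indicator {a<..<b} t)"
  proof (rule integral_dominated_convergence[where w = "\<lambda>t. norm (f t)"])
    show "\<And>k. s k \<in> borel_measurable ?M" using si by (auto intro: borel_measurable_integrable)
    show "integrable ?M (\<lambda>t. norm (f t))" using f by simp
    show "AE x in ?M. (\<lambda>k. s k x) \<longlonglongrightarrow> f x * indicator {a<..<b} x"
      by (rule AE_I2) (rule lim)
    show "AE x in ?M. norm (s k x) \<le> norm (f x)" for k
    proof (rule AE_I2)
      fix x
      have "norm (complex_of_real (G k (ex 1 x))) \<le> 1" using G01[of k "ex 1 x"] by simp
      then show "norm (s k x) \<le> norm (f x)"
        by (simp add: s_def norm_mult) (metis mult.right_neutral mult_left_mono norm_ge_zero)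
    qed
  qed (rule meas)
  then have "(\<lambda>k. 0) \<longlonglongrightarrow> integral\<^sup>L ?M (\<lambda>t. f t * indicator {a<..<b} t)"
    by (simp add: s0)
  then show ?thesis by (simp add: LIMSEQ_const_iff)
qed

lemma ae_zero_from_intervals:
  fixes f :: "real \<Rightarrow> complex"
  assumes f: "integrable unit_interval_measure f"
    and z: "\<And>a b. 0 < a \<Longrightarrow> a < b \<Longrightarrow> b < 1 \<Longrightarrow>
       integral\<^sup>L unit_interval_measure (\<lambda>t. f t * indicator {a<..<b} t) = 0"
  shows "AE t in unit_interval_measure. f t = 0"
proof -
  let ?M = unit_interval_measure
  define F where "F x = (if x \<in> {0..1} then f x else 0)" for x
  have si: "set_integrable lebesgue {0..1} f"
    using f by (simp add: set_integrable_def integrable_restrict_space)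
  have "f integrable_on {0..1}" by (rule set_lebesgue_integral_eq_integral(1)[OF si])
  then have FU: "F integrable_on UNIV" unfolding F_def by (rule iffD2[OF integrable_restrict_UNIV])
  have Fc: "F integrable_on cbox c d" for c d
    by (rule integrable_on_subcbox[OF FU]) auto
  have Fz: "integral {a..b} F = 0" if ab: "0 < a" "a < b" "b < 1" for a b
  proof -
    have sab: "set_integrable lebesgue {a<..<b} f"
      by (rule set_integrable_subset[OF si]) (use ab in auto)
    have "integral {a..b} F = integral {a<..<b} F" by (rule integral_open_interval_real)
    also have "\<dots> = integral {a<..<b} f"
      by (rule Henstock_Kurzweil_Integration.integral_cong) (use ab in \<open>auto simp: F_def\<close>)
    also have "\<dots> = (LINT x:{a<..<b}|lebesgue. f x)"
      by (rule set_lebesgue_integral_eq_integral(2)[OF sab, symmetric])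
    also have "\<dots> = integral\<^sup>L lebesgue (\<lambda>x. indicator {0..1} x *\<^sub>R (f x * indicator {a<..<b} x))"
      unfolding set_lebesgue_integral_def
      by (rule Bochner_Integration.integral_cong) (use ab in \<open>auto split: split_indicator\<close>)
    also have "\<dots> = integral\<^sup>L ?M (\<lambda>x. f x * indicator {a<..<b} x)"
      by (rule integral_restrict_space[symmetric]) auto
    also have "\<dots> = 0" by (rule z[OF ab])
    finally show ?thesis .
  qed
  obtain N where N: "negligible N"
    and dif: "\<And>x e. \<lbrakk>x \<notin> N; 0 < e\<rbrakk> \<Longrightarrow>
       \<exists>d>0. \<forall>h. 0 < h \<and> h < d \<longrightarrow>
         norm (integral (cbox x (x + h *\<^sub>R One)) F /\<^sub>R h ^ DIM(real) - F x) < e"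
    using integrable_ccontinuous_explicit[of F] Fc by blast
  have F0: "F x = 0" if x: "x \<notin> N" "0 < x" "x < 1" for x
  proof (rule ccontr)
    assume ne: "F x \<noteq> 0"
    then obtain d where d: "d > 0" and dd: "\<And>h. 0 < h \<Longrightarrow> h < d \<Longrightarrow>
         norm (integral (cbox x (x + h *\<^sub>R One)) F /\<^sub>R h ^ DIM(real) - F x) < norm (F x)"
      using dif[OF x(1), of "norm (F x)"] by auto
    define h where "h = min (d / 2) ((1 - x) / 2)"
    have h1: "h \<le> (1 - x) / 2" unfolding h_def by (rule min.cobounded2)
    have h: "0 < h" "h < d" "x + h < 1" using d x h1 by (auto simp: h_def)
    have "integral (cbox x (x + h *\<^sub>R One)) F = 0"
      using Fz[of x "x + h"] h x by simp
    then have "norm (0 - F x) < norm (F x)" using dd[OF h(1) h(2)] by simp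
    then show False by simp
  qed
  have negl: "negligible (N \<union> {0, 1})" using N by (intro negligible_Un) auto
  show ?thesis
  proof (rule AE_I')
    show "(N \<union> {0, 1}) \<inter> {0..1} \<in> null_sets ?M"
    proof -
      have "negligible ((N \<union> {0, 1}) \<inter> {0..1})" by (rule negligible_subset[OF negl]) auto
      then have A: "(N \<union> {0, 1}) \<inter> {0..1} \<in> null_sets lebesgue" by (simp only: negligible_iff_null_sets)
      have "{0..1::real} \<in> sets lebesgue" by simp
      from null_sets_restrict_space[OF this, of "(N \<union> {0, 1}) \<inter> {0..1}"] A
      show ?thesis by blast
    qed
    show "{x \<in> space ?M. f x \<noteq> 0} \<subseteq> (N \<union> {0, 1}) \<inter> {0..1}"
    proof
      fix x assume x: "x \<in> {x \<in> space ?M. f x \<noteq> 0}"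
      then have x01: "x \<in> {0..1}" by simp
      show "x \<in> (N \<union> {0, 1}) \<inter> {0..1}"
      proof (rule ccontr)
        assume "x \<notin> (N \<union> {0, 1}) \<inter> {0..1}"
        then have "x \<notin> N" "0 < x" "x < 1" using x01 by auto
        then have "F x = 0" by (rule F0)
        then show False using x x01 by (simp add: F_def)
      qed
    qed
  qed
qed

lemma complete_ex:
  assumes "f \<in> L2_01" "\<And>n. L2_inner f (ex n) = 0"
  shows "AE t in unit_interval_measure. f t = 0"
  using assms L2_integrable[OF assms(1)]
  by (intro ae_zero_from_intervals interval_ortho) auto

theorem theorem3p1:
  shows "L2_orthonormal_basis (\<lambda>(p, \<tau>). DOST p \<tau>) DOST_index"
  unfolding L2_orthonormal_basis_def
proof (intro conjI ballI impI)
  fix i assume "i \<in> DOST_index"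
  show "(case i of (p, \<tau>) \<Rightarrow> DOST p \<tau>) \<in> L2_01"
    by (cases i) (auto intro: cont_L2 DOST_cont)
next
  fix i j assume i: "i \<in> DOST_index" and j: "j \<in> DOST_index"
  obtain p \<tau> where pt: "i = (p, \<tau>)" by (cases i)
  obtain p' \<tau>' where pt': "j = (p', \<tau>')" by (cases j)
  have "L2_inner (DOST p \<tau>) (DOST p' \<tau>') =
     (\<Sum>f\<in>band p. \<Sum>g\<in>band p'. cf p \<tau> f * cnj (cf p' \<tau>' g) * (if f = g then 1 else 0))"
    unfolding DOST_repr[abs_def] by (rule inner_sums) auto
  also have "\<dots> = (if i = j then 1 else 0)"
  proof (cases "p = p'")
    case True
    have "(\<Sum>f\<in>band p. \<Sum>g\<in>band p. cf p \<tau> f * cnj (cf p \<tau>' g) * (if f = g then 1 else 0)) =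
        (\<Sum>f\<in>band p. cf p \<tau> f * cnj (cf p \<tau>' f))"
      by (intro sum.cong refl) (simp add: if_distrib cong: if_cong)
    also have "\<dots> = (if \<tau> = \<tau>' then 1 else 0)"
      using i j True pt pt' by (intro cf_orth) (auto simp: DOST_index_def)
    finally show ?thesis using True pt pt' by simp
  next
    case False
    then have "band p \<inter> band p' = {}" by (rule band_disj)
    then have "(if f = g then 1 else 0) = (0::complex)" if "f \<in> band p" "g \<in> band p'" for f g
      using that by auto
    then show ?thesis using False pt pt' by simp
  qed
  finally show "L2_inner ((case i of (p, \<tau>) \<Rightarrow> DOST p \<tau>)) ((case j of (p, \<tau>) \<Rightarrow> DOST p \<tau>)) =
      (if i = j then 1 else 0)" using pt pt' by simp
next
  fix f assume f: "f \<in> L2_01"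
  assume orth: "\<forall>i\<in>DOST_index. L2_inner f (case i of (p, \<tau>) \<Rightarrow> DOST p \<tau>) = 0"
  show "AE t in unit_interval_measure. f t = 0"
  proof (rule complete_ex[OF f])
    fix n
    obtain p d where d: "\<And>t. ex n t = (\<Sum>\<tau><beta p. d \<tau> * DOST p \<tau> t)" using ex_inv by blast
    have "ex n = (\<lambda>t. \<Sum>\<tau><beta p. d \<tau> * DOST p \<tau> t)" using d by (simp add: fun_eq_iff)
    then have "L2_inner f (ex n) = (\<Sum>\<tau><beta p. cnj (d \<tau>) * L2_inner f (DOST p \<tau>))"
      using L2_integrable[OF f] by (simp add: inner_sum_right DOST_cont)
    also have "\<dots> = 0" using orth by (simp add: DOST_index_def)
    finally show "L2_inner f (ex n) = 0" .
  qed
qed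


end
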